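(* Consider an open quantum system on a finite-dimensional Hilbert space $\mathcal H$ with Hamiltonian $H$ and a single coupling operator $L$, and let $V$ be a Lyapunov operator of the system (commuting with $H$). If $cV\le\mathfrak D(V)$ for some constant $c>0$, then for every initial density state the state trajectory $\rho_t$ converges to $Z_V$, i.e. every limit point of $\rho_t$ as $t\to\infty$ lies in $Z_V$.
   Context: The density state (positive semidefinite, trace one) evolves by $\dot\rho_t=-i[H,\rho_t]+L\rho_tL^\dagger-\tfrac12L^\dagger L\rho_t-\tfrac12\rho_tL^\dagger L$; for an observable $X$ commuting with $H$ the generator is $\mathcal G(X)=L^\dagger XL-\tfrac12L^\dagger LX-\tfrac12XL^\dagger L$ and $\frac{d}{dt}\operatorname{tr}(X\rho_t)=\operatorname{tr}(\mathcal G(X)\rho_t)$. Standing assumption: the observables considered commute with $H$. A Lyapunov operator is a self-adjoint $V\ge0$ whose smallest eigenvalue is $0$ and with $\mathcal G(V)\le0$. The dissipation functional is $\mathfrak D(X)=\mathcal G(X^\dagger X)-\mathcal G(X^\dagger)X-X^\dagger\mathcal G(X)=[L^\dagger,X^\dagger][X,L]$. $Z_V=\{\rho \text{ density state}:\operatorname{tr}(V\rho)=0\}$; convergence of states means convergence of $\operatorname{tr}(\rho Y)$ for all operators $Y$. *)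

theory Defs
  imports "HOL-Analysis.Analysis"
begin

type_synonym 'n op = "complex^'n^'n"

definition adj :: "'n::finite op \<Rightarrow> 'n op" where
  "adj A = (\<chi> i j. cnj (A $ j $ i))"

definition smult_op :: "complex \<Rightarrow> 'n::finite op \<Rightarrow> 'n op" where
  "smult_op c A = (\<chi> i j. c * A $ i $ j)"

definition self_adjoint :: "'n::finite op \<Rightarrow> bool" where
  "self_adjoint A \<longleftrightarrow> adj A = A"

definition psd :: "'n::finite op \<Rightarrow> bool" where
  "psd A \<longleftrightarrow> self_adjoint A \<and>
     (\<forall>x::complex^'n. 0 \<le> Re (\<Sum>i\<in>UNIV. cnj (x $ i) * (A *v x) $ i))"

definition loewner_le :: "'n::finite op \<Rightarrow> 'n op \<Rightarrow> bool" where
  "loewner_le A B \<longleftrightarrow> self_adjoint A \<and> self_adjoint B \<and> psd (B - A)"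

definition eigenvalues :: "'n::finite op \<Rightarrow> complex set" where
  "eigenvalues A = {\<mu>. \<exists>x::complex^'n. x \<noteq> 0 \<and> A *v x = smult_op \<mu> (mat 1) *v x}"

definition density_state :: "'n::finite op \<Rightarrow> bool" where
  "density_state \<rho> \<longleftrightarrow> psd \<rho> \<and> trace \<rho> = 1"

definition lindblad :: "'n::finite op \<Rightarrow> 'n op \<Rightarrow> 'n op \<Rightarrow> 'n op" where
  "lindblad H L \<rho> =
     smult_op (-\<i>) (H ** \<rho> - \<rho> ** H) + L ** \<rho> ** adj L
     - smult_op (1/2) (adj L ** L ** \<rho>) - smult_op (1/2) (\<rho> ** adj L ** L)"

text \<open>Generator on observables commuting with H.\<close>
definition gen :: "'n::finite op \<Rightarrow> 'n op \<Rightarrow> 'n op" where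
  "gen L X = adj L ** X ** L - smult_op (1/2) (adj L ** L ** X) - smult_op (1/2) (X ** adj L ** L)"

definition dissip :: "'n::finite op \<Rightarrow> 'n op \<Rightarrow> 'n op" where
  "dissip L X = gen L (adj X ** X) - gen L (adj X) ** X - adj X ** gen L X"

definition lyapunov_op :: "'n::finite op \<Rightarrow> 'n op \<Rightarrow> bool" where
  "lyapunov_op L V \<longleftrightarrow> self_adjoint V \<and> psd V
     \<and> 0 \<in> eigenvalues V \<and> (\<forall>\<mu>\<in>eigenvalues V. 0 \<le> Re \<mu>)
     \<and> loewner_le (gen L V) 0"

definition Z_set :: "'n::finite op \<Rightarrow> 'n op set" where
  "Z_set V = {\<rho>. density_state \<rho> \<and> trace (V ** \<rho>) = 0}"

definition state_conv :: "(nat \<Rightarrow> 'n::finite op) \<Rightarrow> 'n op \<Rightarrow> bool" where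
  "state_conv r \<sigma> \<longleftrightarrow> (\<forall>Y. (\<lambda>k. trace (r k ** Y)) \<longlonglongrightarrow> trace (\<sigma> ** Y))"

definition limit_point_at_top :: "(real \<Rightarrow> 'n::finite op) \<Rightarrow> 'n op \<Rightarrow> bool" where
  "limit_point_at_top \<rho> \<sigma> \<longleftrightarrow>
     (\<exists>ts::nat \<Rightarrow> real. filterlim ts at_top sequentially \<and> state_conv (\<lambda>k. \<rho> (ts k)) \<sigma>)"

end

theory Submission
  imports Defs
begin


type_synonym 'n vc = "complex^'n"

definition ip :: "complex^'n::finite \<Rightarrow> complex^'n \<Rightarrow> complex" where
  "ip y x = (\<Sum>i\<in>UNIV. cnj (y$i) * x$i)"

definition qf :: "'n::finite op \<Rightarrow> complex^'n \<Rightarrow> complex" where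
  "qf A x = ip x (A *v x)"

definition outer :: "complex^'n::finite \<Rightarrow> 'n op" where
  "outer u = (\<chi> i j. u$i * cnj (u$j))"

lemma psd_iff: "psd A \<longleftrightarrow> self_adjoint A \<and> (\<forall>x. 0 \<le> Re (qf A x))"
  by (simp add: psd_def qf_def ip_def)

lemma adj_nth[simp]: "adj A $ i $ j = cnj (A $ j $ i)"
  by (simp add: adj_def)

lemma smult_nth[simp]: "smult_op c A $ i $ j = c * A $ i $ j"
  by (simp add: smult_op_def)

lemma adj_adj[simp]: "adj (adj A) = A"
  by (simp add: vec_eq_iff)

lemma adj_add[simp]: "adj (A + B) = adj A + adj B"
  by (simp add: vec_eq_iff)

lemma adj_diff[simp]: "adj (A - B) = adj A - adj B"
  by (simp add: vec_eq_iff)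

lemma adj_smult[simp]: "adj (smult_op c A) = smult_op (cnj c) (adj A)"
  by (simp add: vec_eq_iff)

lemma adj_mult[simp]: "adj (A ** B) = adj B ** adj A"
  by (simp add: vec_eq_iff matrix_matrix_mult_def mult.commute)

lemma adj_zero[simp]: "adj 0 = 0"
  by (simp add: vec_eq_iff)

lemma adj_mat1[simp]: "adj (mat 1) = mat 1"
  by (simp add: vec_eq_iff mat_def)

lemma smult_mult_left[simp]: "smult_op c A ** B = smult_op c (A ** B)"
  by (simp add: vec_eq_iff matrix_matrix_mult_def sum_distrib_left mult.assoc)

lemma smult_mult_right[simp]: "A ** smult_op c B = smult_op c (A ** B)"
  by (simp add: vec_eq_iff matrix_matrix_mult_def sum_distrib_left algebra_simps)

lemma trace_smult[simp]: "trace (smult_op c A) = c * trace A"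
  by (simp add: trace_def sum_distrib_left)

lemma smult_add: "smult_op c (A + B) = smult_op c A + smult_op c B"
  by (simp add: vec_eq_iff algebra_simps)

lemma smult_diff: "smult_op c (A - B) = smult_op c A - smult_op c B"
  by (simp add: vec_eq_iff algebra_simps)

lemma smult_smult[simp]: "smult_op c (smult_op d A) = smult_op (c*d) A"
  by (simp add: vec_eq_iff)

lemma smult_mv[simp]: "smult_op c A *v x = c *s (A *v x)"
  by (simp add: vec_eq_iff matrix_vector_mult_def sum_distrib_left mult.assoc)

lemma ip_adj: "ip y (A *v x) = ip (adj A *v y) x"
  apply (simp add: ip_def matrix_vector_mult_def sum_distrib_left sum_distrib_right)
  apply (subst sum.swap) by (simp add: algebra_simps)

lemma ip_cnj: "cnj (ip y x) = ip x y"
  by (simp add: ip_def mult.commute)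

lemma ip_add_right: "ip y (x + z) = ip y x + ip y z"
  by (simp add: ip_def algebra_simps sum.distrib)
lemma ip_diff_right: "ip y (x - z) = ip y x - ip y z"
  by (simp add: ip_def algebra_simps sum_subtractf)
lemma ip_add_left: "ip (y + w) x = ip y x + ip w x"
  by (simp add: ip_def algebra_simps sum.distrib)
lemma ip_diff_left: "ip (y - w) x = ip y x - ip w x"
  by (simp add: ip_def algebra_simps sum_subtractf)
lemma ip_smult_right: "ip y (c *s x) = c * ip y x"
  by (simp add: ip_def sum_distrib_left algebra_simps)
lemma ip_smult_left: "ip (c *s y) x = cnj c * ip y x"
  by (simp add: ip_def sum_distrib_left algebra_simps)

lemma Re_ip: "Re (ip x y) = inner x y"
  by (simp add: ip_def inner_vec_def inner_complex_def Re_sum)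

lemma ip_self: "ip x x = complex_of_real ((norm x)\<^sup>2)"
proof -
  have "Im (ip x x) = 0"
    by (simp add: ip_def Im_sum algebra_simps)
  moreover have "Re (ip x x) = (norm x)\<^sup>2"
    by (simp add: Re_ip power2_norm_eq_inner)
  ultimately show ?thesis by (simp add: complex_eq_iff)
qed

lemma mv_mult[simp]: "(A ** B) *v x = A *v (B *v x)"
  by (simp add: matrix_vector_mul_assoc)

lemma mv_add: "(A + B) *v (x::complex^'n::finite) = A *v x + B *v x"
  by (simp add: matrix_vector_mult_def vec_eq_iff algebra_simps sum.distrib)
lemma mv_diff: "(A - B) *v (x::complex^'n::finite) = A *v x - B *v x"
  by (rule matrix_vector_mult_diff_rdistrib)
lemma mv_add_right: "A *v (x + y) = A *v x + A *v (y::complex^'n::finite)"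
  by (simp add: matrix_vector_mult_def vec_eq_iff algebra_simps sum.distrib)
lemma mv_diff_right: "A *v (x - y) = A *v x - A *v (y::complex^'n::finite)"
  by (rule matrix_vector_mult_diff_distrib)
lemma mv_smult_right: "A *v (c *s x) = c *s (A *v (x::complex^'n::finite))"
  by (rule vec.scale)

lemma mv_bounded: "\<exists>K>0. \<forall>x. norm (A *v x) \<le> K * norm (x::complex^'n::finite)"
proof -
  have "bounded_linear ((*v) A)" by simp
  then obtain K where "K>0" "\<forall>x. norm (A *v x) \<le> norm x * K"
    using bounded_linear.pos_bounded by blast
  then show ?thesis by (metis mult.commute)
qed

lemma sa_ip: "self_adjoint A \<Longrightarrow> ip y (A *v x) = ip (A *v y) x"
  by (simp add: ip_adj self_adjoint_def)

lemma sa_qf_real: "self_adjoint A \<Longrightarrow> Im (qf A x) = 0"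
proof -
  assume a: "self_adjoint A"
  have "cnj (qf A x) = qf A x"
    unfolding qf_def by (simp add: ip_cnj sa_ip[OF a])
  then show ?thesis by (metis Reals_cnj_iff complex_is_Real_iff)
qed

lemma real_quad_aux:
  fixes a m q :: real
  assumes "\<And>t. 0 \<le> a - 2*t*m + t*t*m*q" "m \<ge> 0" "q \<ge> 0"
  shows "m \<le> a * q"
proof (cases "q = 0")
  case True
  show ?thesis
  proof (rule ccontr)
    assume "\<not> m \<le> a*q"
    then have m: "m > 0" using True by simp
    have "0 \<le> a - 2*((a+1)/(2*m))*m" using assms(1)[of "(a+1)/(2*m)"] True by simp
    also have "\<dots> = -1" using m by (simp add: field_simps)
    finally show False by simp
  qed
next
  case False
  then have q: "q > 0" using assms by simp
  have "0 \<le> a - 2*(1/q)*m + (1/q)*(1/q)*m*q" by (rule assms(1))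
  also have "\<dots> = a - m/q" using q by (simp add: field_simps)
  finally show ?thesis using q by (simp add: field_simps)
qed

lemma trace_outer: "trace (A ** outer u) = qf A u"
  apply (simp add: trace_def outer_def matrix_matrix_mult_def qf_def ip_def matrix_vector_mult_def sum_distrib_left)
  by (simp add: ac_simps)

lemma psd_cs:
  assumes "psd A"
  shows "(cmod (ip y (A *v x)))\<^sup>2 \<le> Re (qf A x) * Re (qf A y)"
proof -
  have sa: "self_adjoint A" and pos: "\<And>z. 0 \<le> Re (qf A z)" using assms by (auto simp: psd_iff)
  define b where "b = ip y (A *v x)"
  have cb: "ip x (A *v y) = cnj b"
    unfolding b_def by (simp add: sa_ip[OF sa] ip_cnj)
  have rx: "qf A x = complex_of_real (Re (qf A x))" and ry: "qf A y = complex_of_real (Re (qf A y))"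
    using sa_qf_real[OF sa] by (simp_all add: complex_eq_iff)
  have "\<And>t. 0 \<le> Re (qf A x) - 2*t*(cmod b)\<^sup>2 + t*t*(cmod b)\<^sup>2 * Re (qf A y)"
  proof -
    fix t :: real
    define l where "l = complex_of_real t * b"
    have "qf A (x - l *s y) = qf A x - l * cnj b - cnj l * b + l * cnj l * qf A y"
      unfolding qf_def by (simp add: mv_diff_right mv_smult_right ip_diff_left ip_diff_right
          ip_smult_left ip_smult_right cb b_def[symmetric] algebra_simps)
    also have "\<dots> = complex_of_real (Re (qf A x) - 2*t*(cmod b)\<^sup>2 + t*t*(cmod b)\<^sup>2 * Re (qf A y))"
      apply (subst rx, subst ry)
      unfolding l_def cmod_power2 by (simp add: complex_eq_iff cmod_power2 algebra_simps power2_eq_square)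
    finally show "0 \<le> Re (qf A x) - 2*t*(cmod b)\<^sup>2 + t*t*(cmod b)\<^sup>2 * Re (qf A y)"
      using pos[of "x - l *s y"] by simp
  qed
  then have "(cmod b)\<^sup>2 \<le> Re (qf A x) * Re (qf A y)"
    by (intro real_quad_aux) (auto simp: pos)
  then show ?thesis by (simp add: b_def)
qed



lemma psd_kernel:
  assumes "psd A" "Re (qf A x) = 0"
  shows "A *v x = 0"
proof -
  have "(cmod (ip (A *v x) (A *v x)))\<^sup>2 \<le> 0"
    using psd_cs[OF assms(1), of "A *v x" x] assms(2) by simp
  then have "(norm (A *v x))\<^sup>2 = 0"
    by (simp add: ip_self)
  then show ?thesis by simp
qed

lemma psd_sq_bound:
  fixes P :: "'n::finite op"
  assumes "psd P" "\<And>y. norm (P *v y) \<le> K * norm y"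
  shows "(norm (P *v x))\<^sup>2 \<le> K * Re (qf P x)"
proof -
  have sa: "self_adjoint P" and pos: "\<And>z. 0 \<le> Re (qf P z)" using assms by (auto simp: psd_iff)
  have K0: "K \<ge> 0"
  proof -
    have "0 \<le> norm (P *v axis (undefined::'n) 1)" by simp
    also have "\<dots> \<le> K * norm (axis (undefined::'n) (1::complex))" using assms(2) by blast
    finally show ?thesis by (simp add: norm_axis_1)
  qed
  have "((norm (P *v x))\<^sup>2)\<^sup>2 = (cmod (ip (P *v x) (P *v x)))\<^sup>2"
    by (simp add: ip_self norm_power)
  also have "\<dots> \<le> Re (qf P x) * Re (qf P (P *v x))"
    by (rule psd_cs[OF assms(1)])
  also have "Re (qf P (P *v x)) \<le> K * (norm (P *v x))\<^sup>2"
  proof -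
    have "Re (qf P (P *v x)) = inner (P *v x) (P *v (P *v x))" by (simp add: qf_def Re_ip)
    also have "\<dots> \<le> norm (P *v x) * norm (P *v (P *v x))" by (rule norm_cauchy_schwarz)
    also have "\<dots> \<le> norm (P *v x) * (K * norm (P *v x))"
      by (intro mult_left_mono assms(2)) simp
    finally show ?thesis by (simp add: power2_eq_square algebra_simps)
  qed
  then have "Re (qf P x) * Re (qf P (P *v x)) \<le> Re (qf P x) * (K * (norm (P *v x))\<^sup>2)"
    by (intro mult_left_mono pos)
  finally have h: "((norm (P *v x))\<^sup>2)\<^sup>2 \<le> (K * Re (qf P x)) * (norm (P *v x))\<^sup>2"
    by (simp add: algebra_simps)
  show ?thesis
  proof (cases "norm (P *v x) = 0")
    case True then show ?thesis using pos[of x] K0 by simp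
  next
    case False
    then have n0: "(norm (P *v x))\<^sup>2 > 0" by simp
    have h2: "(norm (P *v x))\<^sup>2 * (norm (P *v x))\<^sup>2 \<le> (K * Re (qf P x)) * (norm (P *v x))\<^sup>2"
      using h by (metis power2_eq_square)
    show ?thesis by (rule mult_right_le_imp_le[OF h2 n0])
  qed
qed



lemma ip_axis_left: "ip (axis i 1) x = x $ i"
proof -
  have "ip (axis i 1) x = (\<Sum>j\<in>UNIV. if j = i then x$j else 0)"
    unfolding ip_def by (intro sum.cong) (auto simp: axis_def)
  then show ?thesis by simp
qed

lemma mv_axis: "(A *v axis j 1) $ i = A $ i $ j"
  by (simp add: matrix_vector_mult_def axis_def if_distrib cong: if_cong)

lemma qf_axis: "qf A (axis i 1) = A $ i $ i"
  by (simp add: qf_def ip_axis_left mv_axis)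

lemma sa_entry: "self_adjoint A \<Longrightarrow> A $ j $ i = cnj (A $ i $ j)"
  by (metis adj_nth self_adjoint_def)

lemma outer_mv: "outer w *v x = ip w x *s w"
  by (simp add: vec_eq_iff matrix_vector_mult_def outer_def ip_def sum_distrib_left sum_distrib_right ac_simps)

lemma qf_outer: "qf (outer w) x = complex_of_real ((cmod (ip w x))\<^sup>2)"
proof -
  have "ip x w = cnj (ip w x)" by (simp add: ip_cnj)
  then show ?thesis unfolding qf_def outer_mv ip_smult_right
    using complex_norm_square[of "ip w x"] by (simp add: mult.commute)
qed

lemma adj_outer[simp]: "adj (outer w) = outer w"
  by (simp add: vec_eq_iff outer_def)

lemma outer_0[simp]: "outer 0 = 0"
  by (simp add: vec_eq_iff outer_def)

lemma psd_decomp_aux: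
  assumes "finite S"
  shows "psd \<rho> \<Longrightarrow> (\<forall>i j. i \<notin> S \<or> j \<notin> S \<longrightarrow> \<rho>$i$j = 0) \<Longrightarrow> \<exists>u. \<rho> = (\<Sum>k\<in>S. outer (u k))"
  using assms
proof (induction S arbitrary: \<rho> rule: finite_induct)
  case empty
  then show ?case by (simp add: vec_eq_iff)
next
  case (insert a S)
  have sa: "self_adjoint \<rho>" and pos: "\<And>z. 0 \<le> Re (qf \<rho> z)" using insert.prems by (auto simp: psd_iff)
  define r where "r = Re (\<rho>$a$a)"
  have raa: "\<rho>$a$a = complex_of_real r"
    using sa_qf_real[OF sa, of "axis a 1"] by (simp add: qf_axis r_def complex_eq_iff)
  have r0: "r \<ge> 0" using pos[of "axis a 1"] by (simp add: qf_axis r_def)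
  have cs: "(cmod (\<rho>$i$a))\<^sup>2 \<le> Re (\<rho>$i$i) * r" for i
    using psd_cs[OF insert.prems(1), of "axis i 1" "axis a 1"]
    by (simp add: ip_axis_left mv_axis qf_axis r_def mult.commute)
  show ?case
  proof (cases "r = 0")
    case True
    have z1: "\<rho>$i$a = 0" for i using cs[of i] True by simp
    have z2: "\<rho>$a$j = 0" for j using z1[of j] sa_entry[OF sa, of a j] by simp
    have "\<forall>i j. i \<notin> S \<or> j \<notin> S \<longrightarrow> \<rho>$i$j = 0"
    proof (intro allI impI)
      fix i j assume ij: "i \<notin> S \<or> j \<notin> S"
      show "\<rho>$i$j = 0"
      proof (cases "i = a \<or> j = a")
        case True then show ?thesis using z1 z2 by auto
      next
        case False then show ?thesis using ij insert.prems(2) by auto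
      qed
    qed
    then obtain u where u: "\<rho> = (\<Sum>k\<in>S. outer (u k))" using insert.IH insert.prems(1) by blast
    have "(\<Sum>k\<in>insert a S. outer ((u(a:=0)) k)) = (\<Sum>k\<in>S. outer ((u(a:=0)) k))"
      using insert.hyps by simp
    also have "\<dots> = (\<Sum>k\<in>S. outer (u k))"
      using insert.hyps by (intro sum.cong) auto
    finally have "\<rho> = (\<Sum>k\<in>insert a S. outer ((u(a:=0)) k))" using u by simp
    then show ?thesis by blast
  next
    case False
    then have rp: "r > 0" using r0 by simp
    define w where "w = (\<chi> i. \<rho>$i$a / complex_of_real (sqrt r))"
    have ow: "outer w $ i $ j = \<rho>$i$a * \<rho>$a$j / complex_of_real r" for i j
    proof -
      have "outer w $ i $ j = (\<rho>$i$a / complex_of_real (sqrt r)) * cnj (\<rho>$j$a / complex_of_real (sqrt r))"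
        unfolding w_def by (simp only: outer_def vec_lambda_beta)
      also have "\<dots> = \<rho>$i$a * cnj (\<rho>$j$a) / (complex_of_real (sqrt r) * complex_of_real (sqrt r))"
        by (simp only: complex_cnj_divide complex_cnj_complex_of_real times_divide_times_eq)
      also have "complex_of_real (sqrt r) * complex_of_real (sqrt r) = complex_of_real r"
        by (simp only: of_real_mult[symmetric] real_sqrt_mult_self abs_of_nonneg[OF r0])
      finally show ?thesis using sa_entry[OF sa, of a j] by simp
    qed
    define \<rho>' where "\<rho>' = \<rho> - outer w"
    have ipw: "ip w x = ip (axis a 1) (\<rho> *v x) / complex_of_real (sqrt r)" for x
    proof -
      have cc: "cnj (\<rho>$i$a) = \<rho>$a$i" for i using sa_entry[OF sa, of a i] by simp
      show ?thesis unfolding ip_axis_left by (simp add: ip_def w_def matrix_vector_mult_def sum_divide_distrib cc)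
    qed
    have psd': "psd \<rho>'"
      unfolding psd_iff
    proof
      show "self_adjoint \<rho>'" using sa by (simp add: \<rho>'_def self_adjoint_def)
      show "\<forall>x. 0 \<le> Re (qf \<rho>' x)"
      proof
        fix x
        have "qf \<rho>' x = qf \<rho> x - qf (outer w) x"
          by (simp add: \<rho>'_def qf_def mv_diff ip_diff_right)
        moreover have "(cmod (ip w x))\<^sup>2 \<le> Re (qf \<rho> x)"
        proof -
          have "(cmod (ip w x))\<^sup>2 = (cmod (ip (axis a 1) (\<rho> *v x)))\<^sup>2 / r"
            using r0 by (simp add: ipw norm_divide power_divide)
          also have "\<dots> \<le> Re (qf \<rho> x) * Re (qf \<rho> (axis a 1)) / r"
            using rp by (intro divide_right_mono psd_cs[OF insert.prems(1)]) simp
          also have "\<dots> = Re (qf \<rho> x)" using rp by (simp add: qf_axis r_def)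
          finally show ?thesis .
        qed
        ultimately show "0 \<le> Re (qf \<rho>' x)" by (simp add: qf_outer)
      qed
    qed
    have supp: "\<forall>i j. i \<notin> S \<or> j \<notin> S \<longrightarrow> \<rho>'$i$j = 0"
    proof (intro allI impI)
      fix i j assume ij: "i \<notin> S \<or> j \<notin> S"
      have e: "\<rho>'$i$j = \<rho>$i$j - \<rho>$i$a * \<rho>$a$j / complex_of_real r"
        by (simp add: \<rho>'_def ow)
      show "\<rho>'$i$j = 0"
      proof (cases "i = a \<or> j = a")
        case True
        then show ?thesis using rp raa by (auto simp: e)
      next
        case False
        then have "i \<notin> insert a S \<or> j \<notin> insert a S" using ij by auto
        then have "\<rho>$i$j = 0" "\<rho>$i$a = 0 \<or> \<rho>$a$j = 0"
          using insert.prems(2) by auto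
        then show ?thesis by (auto simp: e)
      qed
    qed
    obtain u where u: "\<rho>' = (\<Sum>k\<in>S. outer (u k))" using insert.IH[OF psd' supp] by blast
    have "(\<Sum>k\<in>insert a S. outer ((u(a:=w)) k)) = outer w + (\<Sum>k\<in>S. outer ((u(a:=w)) k))"
      using insert.hyps by simp
    also have "(\<Sum>k\<in>S. outer ((u(a:=w)) k)) = (\<Sum>k\<in>S. outer (u k))"
      using insert.hyps by (intro sum.cong) auto
    finally have "(\<Sum>k\<in>insert a S. outer ((u(a:=w)) k)) = outer w + \<rho>'" using u by simp
    then have "\<rho> = (\<Sum>k\<in>insert a S. outer ((u(a:=w)) k))" by (simp add: \<rho>'_def)
    then show ?thesis by blast
  qed
qed

lemma psd_decomp: "psd (\<rho>::'n::finite op) \<Longrightarrow> \<exists>u. \<rho> = (\<Sum>k\<in>(UNIV::'n set). outer (u k))"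
  using psd_decomp_aux[of UNIV \<rho>] by simp

lemma trace_mult_sum: "finite S \<Longrightarrow> trace ((X::'n::finite op) ** sum f S) = (\<Sum>k\<in>S. trace (X ** f k))"
  by (induction S rule: finite_induct) (simp_all add: matrix_add_ldistrib trace_add trace_0[unfolded mat_0])

lemma trace_decomp: "\<rho> = (\<Sum>k\<in>(UNIV::'n::finite set). outer (u k)) \<Longrightarrow> trace (X ** \<rho>) = (\<Sum>k\<in>UNIV. qf X (u k))"
  by (simp add: trace_mult_sum trace_outer)



lemma mm_add_left: "(A + B) ** C = A ** C + B ** (C::'n::finite op)"
  by (simp add: vec_eq_iff matrix_matrix_mult_def distrib_right sum.distrib)
lemma mm_diff_left: "(A - B) ** C = A ** C - B ** (C::'n::finite op)"
  by (simp add: vec_eq_iff matrix_matrix_mult_def left_diff_distrib sum_subtractf)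
lemma mm_diff_right: "C ** (A - B) = C ** A - C ** (B::'n::finite op)"
  by (simp add: vec_eq_iff matrix_matrix_mult_def right_diff_distrib sum_subtractf)
lemma mm_add_right: "C ** (A + B) = C ** A + C ** (B::'n::finite op)"
  by (rule matrix_add_ldistrib)

lemma smult_minus: "smult_op (-c) A = - smult_op c (A::'n::finite op)"
  by (simp add: vec_eq_iff)
lemma smult_add_scalar: "smult_op (c + d) A = smult_op c A + smult_op d (A::'n::finite op)"
  by (simp add: vec_eq_iff distrib_right)

lemma scaleR_smult: "r *\<^sub>R (A::'n::finite op) = smult_op (complex_of_real r) A"
  apply (rule vec_eq_iff[THEN iffD2], intro allI, rule vec_eq_iff[THEN iffD2], intro allI)
  apply (subst vector_scaleR_component)+ by (simp add: scaleR_conv_of_real)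

lemma trace_neg: "trace (- A) = - trace (A::'n::finite op)"
  by (simp add: trace_def sum_negf)

lemma trace_diff: "trace (A - B) = trace A - trace (B::'n::finite op)"
  by (rule trace_sub)

lemma linear_cmatrix:
  fixes f :: "'n::finite op \<Rightarrow> 'b::real_normed_vector"
  assumes "\<And>A B. f (A + B) = f A + f B" "\<And>r A. f (smult_op (complex_of_real r) A) = r *\<^sub>R f A"
  shows "bounded_linear f"
proof -
  have "linear f" by (rule linearI) (simp_all add: assms scaleR_smult)
  then show ?thesis using linear_conv_bounded_linear by blast
qed

lemma bl_trace: "bounded_linear (\<lambda>A::'n::finite op. Re (trace (X ** A)))"
  by (rule linear_cmatrix) (simp_all add: matrix_add_ldistrib trace_add)

lemma qf_add: "qf (A + B) x = qf A x + qf B x"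
  by (simp add: qf_def mv_add ip_add_right)
lemma qf_diff: "qf (A - B) x = qf A x - qf B x"
  by (simp add: qf_def mv_diff ip_diff_right)
lemma qf_smult: "qf (smult_op c A) x = c * qf A x"
  by (simp add: qf_def ip_smult_right)

lemma bl_qf: "bounded_linear (\<lambda>A::'n::finite op. Re (qf A x))"
  by (rule linear_cmatrix) (simp_all add: qf_add qf_smult)

lemma bl_adjdiff: "bounded_linear (\<lambda>A::'n::finite op. A - adj A)"
  by (rule linear_cmatrix) (simp_all add: smult_diff scaleR_smult)

lemma lindblad_add: "lindblad H L (A + B) = lindblad H L A + lindblad H L B"
  by (simp add: lindblad_def mm_add_left mm_add_right smult_add smult_diff algebra_simps)

lemma lindblad_smult: "lindblad H L (smult_op c A) = smult_op c (lindblad H L A)"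
  by (simp add: lindblad_def smult_add smult_diff mult.commute)

lemma bl_lindblad: "bounded_linear (lindblad H L)"
  by (rule linear_cmatrix) (simp_all add: lindblad_add lindblad_smult scaleR_smult)

lemma lindblad_diff: "lindblad H L (A - B) = lindblad H L A - lindblad H L B"
  using lindblad_add[of H L "A - B" B] by (simp add: algebra_simps)

lemma smult_i_swap: "smult_op \<i> (X - Y) = smult_op (-\<i>) (Y - (X::'n::finite op))"
  by (simp add: vec_eq_iff algebra_simps)

lemma lindblad_adj:
  assumes "self_adjoint H"
  shows "adj (lindblad H L A) = lindblad H L (adj A)"
proof -
  have h: "adj H = H" using assms by (simp add: self_adjoint_def)
  show ?thesis
    by (simp add: lindblad_def h matrix_mul_assoc smult_i_swap)
qed

lemma trace_lindblad: "trace (lindblad H L A) = 0"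
proof -
  have 1: "trace (H ** A) = trace (A ** H)" by (rule trace_mul_sym)
  have 2: "trace (L ** A ** adj L) = trace (adj L ** L ** A)"
    by (metis trace_mul_sym matrix_mul_assoc)
  have 3: "trace (A ** adj L ** L) = trace (adj L ** L ** A)"
    by (metis trace_mul_sym matrix_mul_assoc)
  show ?thesis
    by (simp add: lindblad_def trace_add trace_diff 1 2 3 algebra_simps)
qed

lemma trace_X_lindblad:
  assumes "H ** X = X ** H"
  shows "trace (X ** lindblad H L A) = trace (gen L X ** A)"
proof -
  have 1: "trace (X ** (A ** H)) = trace (X ** (H ** A))"
  proof -
    have "trace (X ** (A ** H)) = trace (H ** (X ** A))" by (metis trace_mul_sym matrix_mul_assoc)
    also have "\<dots> = trace (X ** (H ** A))" by (metis assms matrix_mul_assoc)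
    finally show ?thesis .
  qed
  have 2: "trace (X ** (L ** A ** adj L)) = trace (adj L ** X ** L ** A)"
    by (metis trace_mul_sym matrix_mul_assoc)
  have 3: "trace (X ** (adj L ** L ** A)) = trace (X ** adj L ** L ** A)"
    by (metis matrix_mul_assoc)
  have 4: "trace (X ** (A ** adj L ** L)) = trace (adj L ** L ** X ** A)"
    by (metis trace_mul_sym matrix_mul_assoc)
  show ?thesis
    unfolding lindblad_def gen_def
    by (simp add: mm_add_right mm_diff_right mm_add_left mm_diff_left trace_add trace_diff 1 2 3 4 algebra_simps)
qed



lemma deriv_interior:
  assumes "(f has_real_derivative D) (at t within {0..})" "t > 0"
  shows "DERIV f t :> D"
proof -
  have "t \<in> interior {0..}" using assms(2) by simp
  then show ?thesis using assms(1) at_within_interior[of t "{0..}"] by simp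
qed

lemma mono_deriv:
  fixes f f' :: "real \<Rightarrow> real"
  assumes d: "\<And>t. t \<ge> 0 \<Longrightarrow> (f has_real_derivative f' t) (at t within {0..})"
    and p: "\<And>t. t \<ge> 0 \<Longrightarrow> f' t \<ge> 0" and ab: "0 \<le> a" "a \<le> b"
  shows "f a \<le> f b"
proof (rule DERIV_nonneg_imp_increasing_open[OF ab(2)])
  fix x assume "a < x" "x < b"
  then have x: "x > 0" using ab by simp
  show "\<exists>y. DERIV f x :> y \<and> y \<ge> 0"
    using deriv_interior[OF d x] p x by auto
next
  have "continuous (at t within {a..b}) f" if "t \<in> {a..b}" for t
  proof -
    have "continuous (at t within {0..}) f" using that ab by (intro DERIV_continuous[OF d]) auto
    then show ?thesis by (rule continuous_within_subset) (use ab in auto)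
  qed
  then show "continuous_on {a..b} f" by (simp add: continuous_on_eq_continuous_within)
qed

lemma gronwall_zero:
  fixes g g' :: "real \<Rightarrow> real"
  assumes d: "\<And>t. t \<ge> 0 \<Longrightarrow> (g has_real_derivative g' t) (at t within {0..})"
    and b: "\<And>t. t \<ge> 0 \<Longrightarrow> g' t \<le> M * g t" and g0: "g 0 = 0"
    and nn: "\<And>t. t \<ge> 0 \<Longrightarrow> g t \<ge> 0" and t: "t \<ge> 0"
  shows "g t = 0"
proof -
  define h where "h s = - (exp (- M * s) * g s)" for s
  have hd: "(h has_real_derivative (- ((- M * exp (- M * s)) * g s + g' s * exp (- M * s)))) (at s within {0..})"
    if "s \<ge> 0" for s
  proof -
    have e: "((\<lambda>s. exp (- M * s)) has_real_derivative (- M * exp (- M * s))) (at s within {0..})"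
      by (auto intro!: derivative_eq_intros)
    show ?thesis unfolding h_def by (intro DERIV_minus DERIV_mult e d that)
  qed
  have "h 0 \<le> h t"
  proof (rule mono_deriv[where a=0 and b=t, OF hd])
    fix s :: real assume s: "s \<ge> 0"
    have "g' s * exp (- M * s) \<le> M * g s * exp (- M * s)" using b[OF s] by (simp add: mult_right_mono)
    then show "0 \<le> - ((- M * exp (- M * s)) * g s + g' s * exp (- M * s))" by (simp add: algebra_simps)
  qed (simp_all add: t)
  then have "exp (- M * t) * g t \<le> 0" by (simp add: h_def g0)
  then have "g t \<le> 0" by (simp add: mult_le_0_iff)
  then show ?thesis using nn[OF t] by simp
qed

lemma traj_lin:
  assumes "bounded_linear \<phi>" "(\<rho> has_vector_derivative D) (at t within S)"
  shows "((\<lambda>s. \<phi> (\<rho> s)) has_vector_derivative \<phi> D) (at t within S)"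
  by (rule bounded_linear.has_vector_derivative[OF assms])

lemma traj_real:
  fixes \<phi> :: "'a::real_normed_vector \<Rightarrow> real"
  assumes "bounded_linear \<phi>" "(\<rho> has_vector_derivative D) (at t within S)"
  shows "((\<lambda>s. \<phi> (\<rho> s)) has_real_derivative \<phi> D) (at t within S)"
  using traj_lin[OF assms] by (simp add: has_real_derivative_iff_has_vector_derivative)

lemma sa_preserved:
  fixes \<rho> :: "real \<Rightarrow> 'n::finite op"
  assumes traj: "\<And>t. t \<ge> 0 \<Longrightarrow> (\<rho> has_vector_derivative lindblad H L (\<rho> t)) (at t within {0..})"
    and hsa: "self_adjoint H" and init: "self_adjoint (\<rho> 0)" and t: "t \<ge> 0"
  shows "self_adjoint (\<rho> t)"
proof -
  define D where "D s = \<rho> s - adj (\<rho> s)" for s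
  have dD: "(D has_vector_derivative lindblad H L (D s)) (at s within {0..})" if "s \<ge> 0" for s
  proof -
    have "(D has_vector_derivative (lindblad H L (\<rho> s) - adj (lindblad H L (\<rho> s)))) (at s within {0..})"
      unfolding D_def using traj_lin[OF bl_adjdiff traj[OF that]] by simp
    then show ?thesis by (simp add: D_def lindblad_adj[OF hsa] lindblad_diff)
  qed
  obtain K where K: "K > 0" "\<And>x. norm (lindblad H L x) \<le> norm x * K"
    using bounded_linear.pos_bounded[OF bl_lindblad[of H L]] by blast
  define g where "g s = inner (D s) (D s)" for s
  have dg: "(g has_real_derivative 2 * inner (D s) (lindblad H L (D s))) (at s within {0..})"
    if "s \<ge> 0" for s
  proof -
    have "(D has_derivative (\<lambda>h. h *\<^sub>R lindblad H L (D s))) (at s within {0..})"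
      using dD[OF that] by (simp add: has_vector_derivative_def)
    from has_derivative_inner[OF this this]
    have "(g has_derivative (\<lambda>h. inner (D s) (h *\<^sub>R lindblad H L (D s)) + inner (h *\<^sub>R lindblad H L (D s)) (D s))) (at s within {0..})"
      unfolding g_def .
    then have "(g has_derivative (*) (2 * inner (D s) (lindblad H L (D s)))) (at s within {0..})"
      by (rule has_derivative_eq_rhs) (simp add: fun_eq_iff inner_commute algebra_simps)
    then show ?thesis by (simp add: has_field_derivative_def)
  qed
  have "g t = 0"
  proof (rule gronwall_zero[OF dg _ _ _ t])
    fix s :: real assume "s \<ge> 0"
    have "inner (D s) (lindblad H L (D s)) \<le> norm (D s) * norm (lindblad H L (D s))"
      by (rule norm_cauchy_schwarz)
    also have "\<dots> \<le> norm (D s) * (norm (D s) * K)" by (intro mult_left_mono K(2)) simp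
    finally show "2 * inner (D s) (lindblad H L (D s)) \<le> (2*K) * g s"
      by (simp add: g_def power2_norm_eq_inner[symmetric] power2_eq_square algebra_simps)
  next
    show "g 0 = 0" using init by (simp add: g_def D_def self_adjoint_def)
  next
    fix s :: real show "0 \<le> g s" by (simp add: g_def)
  qed
  then have "D t = 0" by (simp add: g_def)
  then show ?thesis by (simp add: D_def self_adjoint_def)
qed

lemma bl_trace_c: "bounded_linear (trace :: 'n::finite op \<Rightarrow> complex)"
  by (rule linear_cmatrix) (simp_all add: trace_add scaleR_conv_of_real)

lemma trace_preserved:
  fixes \<rho> :: "real \<Rightarrow> 'n::finite op"
  assumes traj: "\<And>t. t \<ge> 0 \<Longrightarrow> (\<rho> has_vector_derivative lindblad H L (\<rho> t)) (at t within {0..})"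
    and t: "t \<ge> 0"
  shows "trace (\<rho> t) = trace (\<rho> 0)"
proof -
  have "\<exists>c. \<forall>x\<in>{0..}. trace (\<rho> x) = c"
  proof (rule has_derivative_zero_constant)
    show "convex {0::real..}" by (rule convex_real_interval)
    fix x :: real assume "x \<in> {0..}"
    then have "((\<lambda>s. trace (\<rho> s)) has_vector_derivative trace (lindblad H L (\<rho> x))) (at x within {0..})"
      using traj_lin[OF bl_trace_c traj] by simp
    then show "((\<lambda>s. trace (\<rho> s)) has_derivative (\<lambda>h. 0)) (at x within {0..})"
      by (simp add: trace_lindblad has_vector_derivative_def)
  qed
  then obtain c where "\<forall>x\<in>{0..}. trace (\<rho> x) = c" by blast
  then show ?thesis using t by auto
qed



lemma norm_mv_le:
  fixes A :: "'n::finite op"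
  shows "norm (A *v y) \<le> real CARD('n) * (real CARD('n) * (norm A * norm y))"
proof -
  have c: "norm ((A *v y)$i) \<le> real CARD('n) * (norm A * norm y)" for i
  proof -
    have "norm ((A *v y)$i) = norm (\<Sum>j\<in>UNIV. A$i$j * y$j)" by (simp add: matrix_vector_mult_def)
    also have "\<dots> \<le> (\<Sum>j\<in>UNIV. norm (A$i$j * y$j))" by (rule norm_sum)
    also have "\<dots> \<le> (\<Sum>j\<in>(UNIV::'n set). norm A * norm y)"
    proof (rule sum_mono)
      fix j
      have "norm (A$i$j) \<le> norm A"
        using Finite_Cartesian_Product.norm_nth_le[of "A$i" j] Finite_Cartesian_Product.norm_nth_le[of A i] by linarith
      moreover have "norm (y$j) \<le> norm y" by (rule Finite_Cartesian_Product.norm_nth_le)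
      ultimately show "norm (A$i$j * y$j) \<le> norm A * norm y" by (simp add: norm_mult mult_mono)
    qed
    also have "\<dots> = real CARD('n) * (norm A * norm y)" by simp
    finally show ?thesis .
  qed
  have "norm (A *v y) \<le> (\<Sum>i\<in>UNIV. norm ((A *v y)$i))" unfolding norm_vec_def by (rule L2_set_le_sum) simp
  also have "\<dots> \<le> (\<Sum>i\<in>(UNIV::'n set). real CARD('n) * (norm A * norm y))" by (rule sum_mono) (rule c)
  also have "\<dots> = real CARD('n) * (real CARD('n) * (norm A * norm y))" by simp
  finally show ?thesis .
qed

lemma qf_bound: "\<exists>KK\<ge>0. \<forall>(A::'n::finite op) y. \<bar>Re (qf A y)\<bar> \<le> KK * norm A * (norm y)\<^sup>2"
proof (intro exI[of _ "real CARD('n) * real CARD('n)"] conjI allI)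
  fix A :: "'n op" and y
  have "\<bar>Re (qf A y)\<bar> = \<bar>inner y (A *v y)\<bar>" by (simp add: qf_def Re_ip)
  also have "\<dots> \<le> norm y * norm (A *v y)" by (rule Cauchy_Schwarz_ineq2)
  also have "\<dots> \<le> norm y * (real CARD('n) * (real CARD('n) * (norm A * norm y)))"
    by (intro mult_left_mono norm_mv_le) simp
  finally show "\<bar>Re (qf A y)\<bar> \<le> real CARD('n) * real CARD('n) * norm A * (norm y)\<^sup>2"
    by (simp add: power2_eq_square algebra_simps)
qed simp

lemma scaleR_vec: "r *\<^sub>R (x::complex^'n::finite) = complex_of_real r *s x"
  apply (rule vec_eq_iff[THEN iffD2], intro allI)
  apply (subst vector_scaleR_component) by (simp add: scaleR_conv_of_real)

lemma qf_scaleR: "qf A (r *\<^sub>R x) = complex_of_real (r\<^sup>2) * qf A (x::complex^'n::finite)"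
  by (simp add: scaleR_vec qf_def mv_smult_right ip_smult_left ip_smult_right power2_eq_square)

lemma qf_id: "qf (smult_op (complex_of_real d) (mat 1)) x = complex_of_real (d * (norm x)\<^sup>2)"
  by (simp add: qf_def ip_smult_right ip_self)

lemma qf_zero: "qf A 0 = 0"
  by (simp add: qf_def ip_def)

lemma qf_lindblad_eig:
  assumes hsa: "self_adjoint H" and sa: "self_adjoint \<rho>" and ev: "\<rho> *v x = complex_of_real c *s x"
  shows "Re (qf (lindblad H L \<rho>) x) = Re (qf \<rho> (adj L *v x)) - c * (norm (L *v x))\<^sup>2"
proof -
  have e1: "ip x (H *v (\<rho> *v x)) = complex_of_real c * ip x (H *v x)"
    by (simp add: ev mv_smult_right ip_smult_right)
  have e2: "ip x (\<rho> *v (H *v x)) = complex_of_real c * ip x (H *v x)"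
    by (simp add: sa_ip[OF sa] ev ip_smult_left)
  have e3: "ip x (L *v (\<rho> *v (adj L *v x))) = qf \<rho> (adj L *v x)"
    by (simp add: ip_adj qf_def)
  have e4: "ip x (adj L *v (L *v (\<rho> *v x))) = complex_of_real (c * (norm (L *v x))\<^sup>2)"
    by (simp add: ip_adj ev mv_smult_right ip_smult_right ip_self)
  have e5: "ip x (\<rho> *v (adj L *v (L *v x))) = complex_of_real (c * (norm (L *v x))\<^sup>2)"
  proof -
    have "ip x (\<rho> *v (adj L *v (L *v x))) = ip (\<rho> *v x) (adj L *v (L *v x))" by (rule sa_ip[OF sa])
    also have "\<dots> = complex_of_real c * ip x (adj L *v (L *v x))" by (simp add: ev ip_smult_left)
    also have "ip x (adj L *v (L *v x)) = ip (L *v x) (L *v x)" by (simp add: ip_adj)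
    finally show ?thesis by (simp add: ip_self)
  qed
  have "qf (lindblad H L \<rho>) x = (- \<i>) * (ip x (H *v (\<rho> *v x)) - ip x (\<rho> *v (H *v x))) + ip x (L *v (\<rho> *v (adj L *v x)))
      - 1/2 * ip x (adj L *v (L *v (\<rho> *v x))) - 1/2 * ip x (\<rho> *v (adj L *v (L *v x)))"
    by (simp add: qf_def lindblad_def mv_diff mv_add ip_diff_right ip_add_right ip_smult_right mv_diff_right algebra_simps)
  also have "\<dots> = qf \<rho> (adj L *v x) - complex_of_real (c * (norm (L *v x))\<^sup>2)"
    by (simp add: e1 e2 e3 e4 e5)
  finally show ?thesis by simp
qed



lemma pos_pres:
  fixes \<rho> :: "real \<Rightarrow> 'n::finite op"
  assumes traj: "\<And>t. t \<ge> 0 \<Longrightarrow> (\<rho> has_vector_derivative lindblad H L (\<rho> t)) (at t within {0..})"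
    and hsa: "self_adjoint H" and sa: "\<And>t. t \<ge> 0 \<Longrightarrow> self_adjoint (\<rho> t)"
    and init: "psd (\<rho> 0)" and t: "t \<ge> 0"
  shows "psd (\<rho> t)"
proof -
  obtain KL where KL: "KL > 0" "\<And>y. norm (adj L *v y) \<le> KL * norm y" using mv_bounded by blast
  obtain KK where KK: "KK \<ge> 0" "\<And>(A::'n op) y. \<bar>Re (qf A y)\<bar> \<le> KK * norm A * (norm y)\<^sup>2"
    using qf_bound by blast
  define C where "C = KL\<^sup>2 + 1"
  have Cp: "C > 0" unfolding C_def using zero_le_power2[of KL] by linarith
  have main: "0 \<le> Re (qf (\<rho> s) x) + \<epsilon> * exp (C * s) * (norm x)\<^sup>2" if \<epsilon>: "\<epsilon> > 0" and s: "s \<ge> 0" for \<epsilon> s x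
  proof -
    define \<phi> where "\<phi> s x = Re (qf (\<rho> s) x) + \<epsilon> * exp (C * s) * (norm x)\<^sup>2" for s x
    have d\<phi>: "((\<lambda>s. \<phi> s x) has_real_derivative (Re (qf (lindblad H L (\<rho> s)) x) + \<epsilon> * (C * exp (C * s)) * (norm x)\<^sup>2)) (at s within {0..})"
      if "s \<ge> 0" for s x
    proof -
      have a: "((\<lambda>s. Re (qf (\<rho> s) x)) has_real_derivative Re (qf (lindblad H L (\<rho> s)) x)) (at s within {0..})"
        using traj_real[OF bl_qf traj[OF that]] .
      have b: "((\<lambda>s. \<epsilon> * exp (C * s) * (norm x)\<^sup>2) has_real_derivative \<epsilon> * (C * exp (C * s)) * (norm x)\<^sup>2) (at s within {0..})"
        by (auto intro!: derivative_eq_intros)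
      show ?thesis unfolding \<phi>_def by (rule DERIV_add[OF a b])
    qed
    have c\<phi>: "continuous (at s within {0..}) (\<lambda>s. \<phi> s x)" if "s \<ge> 0" for s x
      using DERIV_continuous[OF d\<phi>[OF that]] .
    have "\<forall>s\<ge>0. \<forall>x. 0 \<le> \<phi> s x"
    proof (rule ccontr)
      assume "\<not> (\<forall>s\<ge>0. \<forall>x. 0 \<le> \<phi> s x)"
      then obtain s1 x1 where s1: "s1 \<ge> 0" "\<phi> s1 x1 < 0" by (auto simp: not_le)
      define B where "B = {s. s \<ge> 0 \<and> (\<exists>x. \<phi> s x < 0)}"
      have Bne: "B \<noteq> {}" using s1 B_def by auto
      have Bbdd: "bdd_below B" unfolding B_def by (rule bdd_belowI[of _ 0]) auto
      define \<tau> where "\<tau> = Inf B"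
      have \<tau>0: "\<tau> \<ge> 0" unfolding \<tau>_def by (rule cInf_greatest[OF Bne]) (auto simp: B_def)
      have below: "0 \<le> \<phi> s x" if "0 \<le> s" "s < \<tau>" for s x
      proof (rule ccontr)
        assume "\<not> 0 \<le> \<phi> s x"
        then have "\<phi> s x < 0" by simp
        then have "s \<in> B" using that unfolding B_def by blast
        then have "\<tau> \<le> s" unfolding \<tau>_def by (rule cInf_lower[OF _ Bbdd])
        then show False using that by simp
      qed
      have at_tau: "0 \<le> \<phi> \<tau> x" for x
      proof (cases "\<tau> = 0")
        case True
        have "0 \<le> Re (qf (\<rho> 0) x)" using init by (simp add: psd_iff)
        moreover have "0 \<le> \<epsilon> * exp (C * 0) * (norm x)\<^sup>2" using \<epsilon> by simp
        ultimately show ?thesis by (simp add: \<phi>_def True)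
      next
        case False
        then have \<tau>p: "\<tau> > 0" using \<tau>0 by simp
        show ?thesis
        proof (rule ccontr)
          assume neg: "\<not> 0 \<le> \<phi> \<tau> x"
          from c\<phi>[OF \<tau>0, of x]
          have "\<forall>e>0. \<exists>d>0. \<forall>s'\<in>{0..}. dist s' \<tau> < d \<longrightarrow> dist (\<phi> s' x) (\<phi> \<tau> x) < e"
            unfolding continuous_within_eps_delta .
          moreover have "- \<phi> \<tau> x > 0" using neg by simp
          ultimately obtain d where d: "d > 0" "\<forall>s'\<in>{0..}. dist s' \<tau> < d \<longrightarrow> dist (\<phi> s' x) (\<phi> \<tau> x) < - \<phi> \<tau> x"
            by blast
          define s' where "s' = max 0 (\<tau> - d/2)"
          have s'1: "s' \<in> {0..}" "dist s' \<tau> < d" "s' < \<tau>"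
            using \<tau>p d(1) by (auto simp: s'_def dist_real_def)
          then have "dist (\<phi> s' x) (\<phi> \<tau> x) < - \<phi> \<tau> x" using d(2) by blast
          then have "\<phi> s' x < 0" by (simp add: dist_real_def)
          moreover have "0 \<le> \<phi> s' x" using below s'1 by simp
          ultimately show False by simp
        qed
      qed
      obtain x0 where x0: "norm x0 = 1" "\<And>y. norm y = 1 \<Longrightarrow> \<phi> \<tau> x0 \<le> \<phi> \<tau> y"
      proof -
        have cont: "continuous_on (sphere 0 1) (\<lambda>y. \<phi> \<tau> y)"
          unfolding \<phi>_def qf_def Re_ip by (intro continuous_intros)
        have ne: "sphere (0::complex^'n) 1 \<noteq> {}"
        proof -
          have "axis undefined (1::complex) \<in> sphere (0::complex^'n) 1" by (simp add: norm_axis_1)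
          then show ?thesis by blast
        qed
        from continuous_attains_inf[OF compact_sphere ne cont] obtain x0 where
          "x0 \<in> sphere 0 1" "\<forall>y\<in>sphere 0 1. \<phi> \<tau> x0 \<le> \<phi> \<tau> y" by blast
        then show ?thesis using that by auto
      qed
      show False
      proof (cases "\<phi> \<tau> x0 > 0")
        case True
        define m where "m = \<phi> \<tau> x0"
        have mp: "m > 0" using True by (simp add: m_def)
        have scal: "\<phi> \<tau> (r *\<^sub>R u) = r\<^sup>2 * \<phi> \<tau> u" for r u
          by (simp add: \<phi>_def qf_scaleR power_mult_distrib algebra_simps)
        have lb: "m * (norm y)\<^sup>2 \<le> \<phi> \<tau> y" for y
        proof (cases "y = 0")
          case True then show ?thesis by (simp add: \<phi>_def qf_zero)
        next
          case False
          define u where "u = (1/norm y) *\<^sub>R y"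
          have nu: "norm u = 1" using False by (simp add: u_def)
          have "y = norm y *\<^sub>R u" using False by (simp add: u_def)
          then have "\<phi> \<tau> y = (norm y)\<^sup>2 * \<phi> \<tau> u" by (metis scal)
          moreover have "m \<le> \<phi> \<tau> u" using x0(2)[OF nu] by (simp add: m_def)
          ultimately show ?thesis by (metis mult.commute mult_right_mono zero_le_power2)
        qed
        have cr: "continuous (at \<tau> within {0..}) \<rho>"
          by (rule has_vector_derivative_continuous[OF traj[OF \<tau>0]])
        then have "\<forall>e>0. \<exists>d>0. \<forall>s'\<in>{0..}. dist s' \<tau> < d \<longrightarrow> dist (\<rho> s') (\<rho> \<tau>) < e"
          unfolding continuous_within_eps_delta .
        moreover have "m / (KK + 1) > 0" using mp KK(1) by simp
        ultimately obtain d where d: "d > 0" "\<forall>s'\<in>{0..}. dist s' \<tau> < d \<longrightarrow> dist (\<rho> s') (\<rho> \<tau>) < m / (KK + 1)"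
          by blast
        have after: "0 \<le> \<phi> s y" if sy: "\<tau> \<le> s" "s < \<tau> + d" for s y
        proof -
          have s0: "s \<in> {0..}" using sy \<tau>0 by simp
          have "dist s \<tau> < d" using sy by (simp add: dist_real_def)
          then have nd: "norm (\<rho> s - \<rho> \<tau>) \<le> m / (KK + 1)" using d(2) s0 by (simp add: dist_norm less_imp_le)
          have "\<bar>Re (qf (\<rho> s - \<rho> \<tau>) y)\<bar> \<le> KK * norm (\<rho> s - \<rho> \<tau>) * (norm y)\<^sup>2" by (rule KK(2))
          also have "\<dots> \<le> KK * (m / (KK + 1)) * (norm y)\<^sup>2"
            by (intro mult_right_mono mult_left_mono nd KK(1)) simp
          also have "\<dots> \<le> m * (norm y)\<^sup>2"
          proof (intro mult_right_mono)
            have "KK * (m / (KK + 1)) = m * (KK / (KK + 1))" by simp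
            also have "\<dots> \<le> m * 1" using KK(1) mp by (intro mult_left_mono) simp_all
            finally show "KK * (m / (KK + 1)) \<le> m" by simp
          qed simp
          finally have q: "Re (qf (\<rho> \<tau>) y) - m * (norm y)\<^sup>2 \<le> Re (qf (\<rho> s) y)"
            by (simp add: qf_diff)
          have "\<epsilon> * exp (C * \<tau>) * (norm y)\<^sup>2 \<le> \<epsilon> * exp (C * s) * (norm y)\<^sup>2"
            using sy Cp \<epsilon> by (intro mult_right_mono mult_left_mono) simp_all
          then have "\<phi> \<tau> y - m * (norm y)\<^sup>2 \<le> \<phi> s y" using q by (simp add: \<phi>_def)
          then show ?thesis using lb[of y] by simp
        qed
        have "\<tau> + d \<le> Inf B"
        proof (rule cInf_greatest[OF Bne])
          fix b assume "b \<in> B"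
          then obtain x where b: "b \<ge> 0" "\<phi> b x < 0" by (auto simp: B_def)
          show "\<tau> + d \<le> b"
          proof (rule ccontr)
            assume "\<not> \<tau> + d \<le> b"
            then have "b < \<tau> + d" by simp
            moreover have "\<not> b < \<tau>" using below[of b x] b by auto
            ultimately have "0 \<le> \<phi> b x" using after by simp
            then show False using b by simp
          qed
        qed
        then show False using d(1) by (simp add: \<tau>_def)
      next
        case False
        then have z: "\<phi> \<tau> x0 = 0" using at_tau[of x0] by simp
        have \<tau>p: "\<tau> > 0"
        proof (rule ccontr)
          assume "\<not> \<tau> > 0"
          then have "\<tau> = 0" using \<tau>0 by simp
          moreover have "0 \<le> Re (qf (\<rho> 0) x0)" using init by (simp add: psd_iff)
          ultimately have "\<phi> \<tau> x0 \<ge> \<epsilon>" by (simp add: \<phi>_def x0(1))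
          then show False using z \<epsilon> by simp
        qed
        define \<delta> where "\<delta> = \<epsilon> * exp (C * \<tau>)"
        have \<delta>p: "\<delta> > 0" using \<epsilon> by (simp add: \<delta>_def)
        have \<phi>\<delta>: "\<phi> \<tau> y = Re (qf (\<rho> \<tau>) y) + \<delta> * (norm y)\<^sup>2" for y
          by (simp add: \<phi>_def \<delta>_def)
        define M where "M = \<rho> \<tau> + smult_op (complex_of_real \<delta>) (mat 1)"
        have qfM: "Re (qf M y) = \<phi> \<tau> y" for y by (simp add: M_def qf_add qf_id \<phi>\<delta>)
        have saM: "self_adjoint M"
          using sa[OF \<tau>0] by (simp add: M_def self_adjoint_def)
        have psdM: "psd M" unfolding psd_iff using saM qfM at_tau by simp
        have "M *v x0 = 0" using psd_kernel[OF psdM] qfM[of x0] z by simp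
        then have "\<rho> \<tau> *v x0 + complex_of_real \<delta> *s x0 = 0" by (simp add: M_def mv_add)
        then have ev: "\<rho> \<tau> *v x0 = complex_of_real (- \<delta>) *s x0"
          by (simp add: vec_eq_iff add_eq_0_iff)
        have Dq: "Re (qf (lindblad H L (\<rho> \<tau>)) x0) = Re (qf (\<rho> \<tau>) (adj L *v x0)) + \<delta> * (norm (L *v x0))\<^sup>2"
          using qf_lindblad_eig[OF hsa sa[OF \<tau>0] ev] by simp
        have nL: "(norm (adj L *v x0))\<^sup>2 \<le> KL\<^sup>2"
          using KL(2)[of x0] x0(1) by (simp add: power_mono)
        have "Re (qf (\<rho> \<tau>) (adj L *v x0)) \<ge> - \<delta> * (norm (adj L *v x0))\<^sup>2"
          using at_tau[of "adj L *v x0"] \<phi>\<delta> by simp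
        moreover have "- \<delta> * (norm (adj L *v x0))\<^sup>2 \<ge> - \<delta> * KL\<^sup>2"
          using nL \<delta>p by simp
        ultimately have r1: "Re (qf (\<rho> \<tau>) (adj L *v x0)) \<ge> - \<delta> * KL\<^sup>2" by simp
        define Dv where "Dv = Re (qf (lindblad H L (\<rho> \<tau>)) x0) + \<epsilon> * (C * exp (C * \<tau>)) * (norm x0)\<^sup>2"
        have "Dv = Re (qf (\<rho> \<tau>) (adj L *v x0)) + \<delta> * (norm (L *v x0))\<^sup>2 + C * \<delta>"
          by (simp add: Dv_def Dq x0(1) \<delta>_def)
        also have "\<dots> \<ge> - \<delta> * KL\<^sup>2 + 0 + C * \<delta>"
          using r1 \<delta>p by (intro add_mono) simp_all
        finally have "Dv \<ge> \<delta>" by (simp add: C_def algebra_simps)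
        then have Dvp: "Dv > 0" using \<delta>p by simp
        have "DERIV (\<lambda>s. \<phi> s x0) \<tau> :> Dv"
          using deriv_interior[OF d\<phi>[OF \<tau>0] \<tau>p] by (simp add: Dv_def)
        from DERIV_pos_inc_left[OF this Dvp] obtain dd where
          dd: "dd > 0" "\<forall>h>0. h < dd \<longrightarrow> \<phi> (\<tau> - h) x0 < \<phi> \<tau> x0" by blast
        define hh where "hh = min (dd/2) (\<tau>/2)"
        have hh: "hh > 0" "hh < dd" "hh \<le> \<tau>/2" using dd(1) \<tau>p by (auto simp: hh_def)
        have "\<phi> (\<tau> - hh) x0 < 0" using dd(2) hh z by simp
        moreover have "0 \<le> \<phi> (\<tau> - hh) x0" by (rule below) (use hh in auto)
        ultimately show False by simp
      qed
    qed
    then show ?thesis using s by (simp add: \<phi>_def)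
  qed
  show ?thesis
    unfolding psd_iff
  proof (intro conjI allI)
    show "self_adjoint (\<rho> t)" by (rule sa[OF t])
    fix x
    show "0 \<le> Re (qf (\<rho> t) x)"
    proof (rule ccontr)
      assume "\<not> 0 \<le> Re (qf (\<rho> t) x)"
      then have neg: "Re (qf (\<rho> t) x) < 0" by simp
      define k where "k = exp (C * t) * (norm x)\<^sup>2 + 1"
      have k: "k > 0" by (simp add: k_def add_nonneg_pos)
      define \<epsilon> where "\<epsilon> = - Re (qf (\<rho> t) x) / (2 * k)"
      have \<epsilon>: "\<epsilon> > 0" using neg k by (simp add: \<epsilon>_def divide_neg_pos)
      have m: "0 \<le> Re (qf (\<rho> t) x) + \<epsilon> * exp (C * t) * (norm x)\<^sup>2" by (rule main[OF \<epsilon> t])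
      have "\<epsilon> * (exp (C * t) * (norm x)\<^sup>2) \<le> \<epsilon> * k"
        using \<epsilon> by (intro mult_left_mono) (simp_all add: k_def)
      also have "\<epsilon> * k = - Re (qf (\<rho> t) x) / 2" using k by (simp add: \<epsilon>_def)
      finally show False using m neg by (simp add: mult.assoc)
    qed
  qed
qed



lemma trace_E: "trace (A ** (\<chi> a b. if a = j \<and> b = i then 1 else 0)) = (A::'n::finite op) $ i $ j"
proof -
  have r: "(\<Sum>l\<in>UNIV. A$k$l * (if l = j \<and> k = i then 1 else 0)) = (if k = i then A$k$j else 0)" for k
  proof (cases "k = i")
    case True
    have "(\<Sum>l\<in>UNIV. A$k$l * (if l = j \<and> k = i then 1 else 0)) = (\<Sum>l\<in>UNIV. if l = j then A$k$l else 0)"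
      by (intro sum.cong) (auto simp: True)
    then show ?thesis using True by simp
  next
    case False then show ?thesis by simp
  qed
  show ?thesis by (simp add: trace_def matrix_matrix_mult_def r)
qed

lemma lim_ev_eq: "((X::nat \<Rightarrow> complex) \<longlongrightarrow> L) sequentially \<Longrightarrow> eventually (\<lambda>k. X k = c) sequentially \<Longrightarrow> L = c"
proof -
  assume a: "(X \<longlongrightarrow> L) sequentially" and b: "eventually (\<lambda>k. X k = c) sequentially"
  have "(X \<longlongrightarrow> c) sequentially" using tendsto_cong[OF b] by simp
  then show ?thesis by (rule LIMSEQ_unique[OF a])
qed

lemma growth_contra:
  fixes h h' :: "real \<Rightarrow> real"
  assumes d: "\<And>t. t \<ge> 0 \<Longrightarrow> (h has_real_derivative h' t) (at t within {0..})"
    and lb: "\<And>t. t \<ge> 0 \<Longrightarrow> h' t \<ge> b" and b: "b > 0" and ub: "\<And>t. t \<ge> 0 \<Longrightarrow> h t \<le> Bd"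
  shows False
proof -
  define T where "T = (Bd - h 0 + 1) / b"
  have Bd: "Bd - h 0 \<ge> 0" using ub[of 0] by simp
  have T: "T \<ge> 0" using Bd b by (simp add: T_def)
  define k where "k t = h t - b * t" for t
  have "k 0 \<le> k T"
  proof (rule mono_deriv[where a=0 and b=T])
    fix t :: real assume "t \<ge> 0"
    show "(k has_real_derivative h' t - b) (at t within {0..})"
      unfolding k_def using d[OF \<open>t \<ge> 0\<close>] by (auto intro!: derivative_eq_intros)
  next
    fix t :: real assume "t \<ge> 0" then show "h' t - b \<ge> 0" using lb by simp
  qed (use T in auto)
  then have "h 0 + b * T \<le> h T" by (simp add: k_def)
  moreover have "b * T = Bd - h 0 + 1" using b by (simp add: T_def)
  ultimately show False using ub[OF T] by simp
qed

lemma key_vec: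
  fixes V G D :: "'n::finite op"
  assumes sV: "self_adjoint V" and sG: "self_adjoint G"
    and Dc: "psd (D - smult_op (complex_of_real c) V)"
    and pP: "psd (0 - G)" and KP: "\<And>y. norm ((0 - G) *v y) \<le> KP * norm y"
    and KV: "\<And>y. norm (V *v y) \<le> KV * norm y" and s: "s > 0" and KP0: "KP \<ge> 0"
  shows "Re (qf (D + G ** V + V ** G) u) \<ge> c * Re (qf V u) + s * KP * Re (qf G u) - KV\<^sup>2 / s * (norm u)\<^sup>2"
proof -
  have q1: "Re (qf D u) \<ge> c * Re (qf V u)"
    using Dc unfolding psd_iff by (auto simp: qf_diff qf_smult)
  have q2: "Re (qf (G ** V) u + qf (V ** G) u) = 2 * inner (G *v u) (V *v u)"
  proof -
    have "qf (G ** V) u = ip (G *v u) (V *v u)" by (simp add: qf_def sa_ip[OF sG])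
    moreover have "qf (V ** G) u = ip (V *v u) (G *v u)" by (simp add: qf_def sa_ip[OF sV])
    moreover have "Re (ip (V *v u) (G *v u)) = inner (G *v u) (V *v u)"
      by (simp add: Re_ip inner_commute)
    ultimately show ?thesis by (simp add: Re_ip)
  qed
  have neg: "(- G) *v u = - (G *v u)" by (simp add: vec_eq_iff matrix_vector_mult_def sum_negf)
  define a where "a = norm (G *v u)"
  define bb where "bb = norm (V *v u)"
  have i1: "inner (G *v u) (V *v u) \<ge> - (a * bb)"
    using Cauchy_Schwarz_ineq2[of "G *v u" "V *v u"] by (simp add: a_def bb_def)
  have i2: "2 * (a * bb) \<le> s * a\<^sup>2 + bb\<^sup>2 / s"
  proof -
    have "0 \<le> (s * a - bb)\<^sup>2 / s" using s by simp
    also have "(s * a - bb)\<^sup>2 / s = s * a\<^sup>2 - 2 * (a * bb) + bb\<^sup>2 / s"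
      using s by (simp add: power2_eq_square field_simps)
    finally show ?thesis by simp
  qed
  have i3: "a\<^sup>2 \<le> KP * Re (qf (0 - G) u)"
  proof -
    have "a = norm ((0 - G) *v u)" by (simp add: a_def neg)
    then show ?thesis using psd_sq_bound[OF pP KP] by simp
  qed
  have i4: "Re (qf (0 - G) u) = - Re (qf G u)" by (simp add: qf_def neg ip_def sum_negf)
  have i5: "bb\<^sup>2 \<le> KV\<^sup>2 * (norm u)\<^sup>2"
    using KV[of u] by (simp add: bb_def power_mono power_mult_distrib[symmetric])
  have e: "Re (qf (D + G ** V + V ** G) u) = Re (qf D u) + Re (qf (G ** V) u + qf (V ** G) u)"
    by (simp add: qf_add)
  have t1: "Re (qf (D + G ** V + V ** G) u) \<ge> c * Re (qf V u) - (s * a\<^sup>2 + bb\<^sup>2 / s)"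
    using e q1 q2 i1 i2 by linarith
  have t2: "s * a\<^sup>2 \<le> s * (KP * (- Re (qf G u)))"
    using i3 i4 s by (intro mult_left_mono) simp_all
  have t3: "bb\<^sup>2 / s \<le> KV\<^sup>2 / s * (norm u)\<^sup>2"
  proof -
    have "bb\<^sup>2 / s \<le> KV\<^sup>2 * (norm u)\<^sup>2 / s" using i5 s by (intro divide_right_mono) simp_all
    then show ?thesis by simp
  qed
  show ?thesis using t1 t2 t3 by (simp add: algebra_simps)
qed



theorem lemma12:
  fixes H L V :: "complex^'n::finite^'n"
    and \<rho> :: "real \<Rightarrow> complex^'n^'n"
    and c :: real
  assumes hamiltonian: "self_adjoint H"
    and commute: "H ** V = V ** H"
    and lyap: "lyapunov_op L V"
    and c_pos: "c > 0"
    and bound: "loewner_le (smult_op (complex_of_real c) V) (dissip L V)"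
    and init: "density_state (\<rho> 0)"
    and traj: "\<And>t. t \<ge> 0 \<Longrightarrow> (\<rho> has_vector_derivative lindblad H L (\<rho> t)) (at t within {0..})"
  shows "\<forall>\<sigma>. limit_point_at_top \<rho> \<sigma> \<longrightarrow> \<sigma> \<in> Z_set V"
proof (intro allI impI)
  fix \<sigma> assume lp: "limit_point_at_top \<rho> \<sigma>"
  have sV: "self_adjoint V" and pV: "psd V" using lyap by (auto simp: lyapunov_op_def)
  define G where "G = gen L V"
  have lG: "loewner_le G 0" using lyap by (simp add: lyapunov_op_def G_def)
  then have sG: "self_adjoint G" and pP: "psd (0 - G)" by (auto simp: loewner_le_def)
  have pD: "psd (dissip L V - smult_op (complex_of_real c) V)" using bound by (simp add: loewner_le_def)
  have init_psd: "psd (\<rho> 0)" and init_tr: "trace (\<rho> 0) = 1" using init by (auto simp: density_state_def)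
  then have init_sa: "self_adjoint (\<rho> 0)" by (simp add: psd_iff)
  have sa_t: "\<And>t. t \<ge> 0 \<Longrightarrow> self_adjoint (\<rho> t)" using sa_preserved[OF traj hamiltonian init_sa] .
  have psd_t: "\<And>t. t \<ge> 0 \<Longrightarrow> psd (\<rho> t)" using pos_pres[OF traj hamiltonian sa_t init_psd] .
  have tr_t: "\<And>t. t \<ge> 0 \<Longrightarrow> trace (\<rho> t) = 1" using trace_preserved[OF traj] init_tr by simp
  obtain KV where KV: "KV > 0" "\<And>y. norm (V *v y) \<le> KV * norm y" using mv_bounded by blast
  obtain KP where KP: "KP > 0" "\<And>y. norm ((0 - G) *v y) \<le> KP * norm y" using mv_bounded by blast
  define f where "f t = Re (trace (V ** \<rho> t))" for t
  define g where "g t = Re (trace ((V ** V) ** \<rho> t))" for t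
  have comm2: "H ** (V ** V) = (V ** V) ** H" using commute by (metis matrix_mul_assoc)
  have df: "(f has_real_derivative Re (trace (G ** \<rho> t))) (at t within {0..})" if "t \<ge> 0" for t
    using traj_real[OF bl_trace[of V] traj[OF that]] trace_X_lindblad[OF commute]
    unfolding f_def G_def by simp
  have dg: "(g has_real_derivative Re (trace (gen L (V ** V) ** \<rho> t))) (at t within {0..})" if "t \<ge> 0" for t
    using traj_real[OF bl_trace[of "V ** V"] traj[OF that]] trace_X_lindblad[OF comm2]
    unfolding g_def by simp
  have genVV: "gen L (V ** V) = dissip L V + G ** V + V ** G"
    using sV by (simp add: dissip_def G_def self_adjoint_def)
  have qfG: "Re (qf G v) \<le> 0" for v
  proof -
    have h1: "0 \<le> Re (qf (0 - G) v)" using pP by (simp add: psd_iff)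
    have neg: "(- G) *v v = - (G *v v)" by (simp add: vec_eq_iff matrix_vector_mult_def sum_negf)
    have h2: "qf (0 - G) v = - qf G v" by (simp add: qf_def ip_def neg sum_negf)
    from h1 have "0 \<le> Re (- qf G v)" by (simp only: h2)
    then show ?thesis by simp
  qed
  have est: "f t \<ge> 0 \<and> Re (trace (G ** \<rho> t)) \<le> 0 \<and> g t \<le> KV\<^sup>2 \<and>
      (\<forall>s>0. Re (trace (gen L (V ** V) ** \<rho> t)) \<ge> c * f t + s * KP * Re (trace (G ** \<rho> t)) - KV\<^sup>2 / s)"
    if t: "t \<ge> 0" for t
  proof -
    obtain u where u: "\<rho> t = (\<Sum>k\<in>(UNIV::'n set). outer (u k))" using psd_decomp[OF psd_t[OF t]] by blast
    have tr: "trace (X ** \<rho> t) = (\<Sum>k\<in>UNIV. qf X (u k))" for X using trace_decomp[OF u] .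
    have nu: "(\<Sum>k\<in>UNIV. (norm (u k))\<^sup>2) = 1"
    proof -
      have "complex_of_real (\<Sum>k\<in>UNIV. (norm (u k))\<^sup>2) = 1"
        using tr[of "mat 1"] tr_t[OF t] by (simp add: qf_def ip_self)
      then show ?thesis by (metis of_real_eq_1_iff)
    qed
    have "f t = (\<Sum>k\<in>UNIV. Re (qf V (u k)))" by (simp add: f_def tr Re_sum)
    also have "\<dots> \<ge> 0" using pV by (intro sum_nonneg) (simp add: psd_iff)
    finally have f0: "f t \<ge> 0" .
    have trG: "Re (trace (G ** \<rho> t)) = (\<Sum>k\<in>UNIV. Re (qf G (u k)))" by (simp add: tr Re_sum)
    have G0: "Re (trace (G ** \<rho> t)) \<le> 0" unfolding trG by (intro sum_nonpos qfG)
    have qVV: "Re (qf (V ** V) v) = (norm (V *v v))\<^sup>2" for v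
      by (simp add: qf_def sa_ip[OF sV] ip_self)
    have "g t = (\<Sum>k\<in>UNIV. (norm (V *v u k))\<^sup>2)" by (simp add: g_def tr Re_sum qVV)
    also have "\<dots> \<le> (\<Sum>k\<in>UNIV. KV\<^sup>2 * (norm (u k))\<^sup>2)"
    proof (rule sum_mono)
      fix k
      have "norm (V *v u k) \<le> KV * norm (u k)" by (rule KV(2))
      then have "(norm (V *v u k))\<^sup>2 \<le> (KV * norm (u k))\<^sup>2" by (simp add: power_mono)
      then show "(norm (V *v u k))\<^sup>2 \<le> KV\<^sup>2 * (norm (u k))\<^sup>2" by (simp add: power_mult_distrib)
    qed
    also have "\<dots> = KV\<^sup>2" by (simp add: sum_distrib_left[symmetric] nu)
    finally have g1: "g t \<le> KV\<^sup>2" .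
    have nu2: "(\<Sum>k\<in>UNIV. KV\<^sup>2 * (norm (u k))\<^sup>2 / s) = KV\<^sup>2 / s" for s
      by (simp add: sum_divide_distrib[symmetric] sum_distrib_left[symmetric] nu)
    have cr: "Re (trace (gen L (V ** V) ** \<rho> t)) \<ge> c * f t + s * KP * Re (trace (G ** \<rho> t)) - KV\<^sup>2 / s"
      if s: "s > 0" for s
    proof -
      have "Re (trace (gen L (V ** V) ** \<rho> t)) = (\<Sum>k\<in>UNIV. Re (qf (dissip L V + G ** V + V ** G) (u k)))"
        by (simp add: tr Re_sum genVV)
      also have "\<dots> \<ge> (\<Sum>k\<in>UNIV. c * Re (qf V (u k)) + s * KP * Re (qf G (u k)) - KV\<^sup>2 / s * (norm (u k))\<^sup>2)"
        by (intro sum_mono key_vec[OF sV sG pD pP KP(2) KV(2) s]) (use KP(1) in simp)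
      also have "(\<Sum>k\<in>UNIV. c * Re (qf V (u k)) + s * KP * Re (qf G (u k)) - KV\<^sup>2 / s * (norm (u k))\<^sup>2)
          = c * f t + s * KP * Re (trace (G ** \<rho> t)) - KV\<^sup>2 / s"
        by (simp add: sum.distrib sum_subtractf sum_distrib_left[symmetric] nu f_def tr Re_sum trG nu2)
      finally show ?thesis .
    qed
    show ?thesis using f0 G0 g1 cr by blast
  qed
  have fmono: "f b \<le> f a" if "0 \<le> a" "a \<le> b" for a b
  proof -
    have "(\<lambda>t. - f t) a \<le> (\<lambda>t. - f t) b"
    proof (rule mono_deriv[where a=a and b=b])
      fix t :: real assume "t \<ge> 0"
      show "((\<lambda>t. - f t) has_real_derivative - Re (trace (G ** \<rho> t))) (at t within {0..})"
        by (rule DERIV_minus[OF df[OF \<open>t \<ge> 0\<close>]])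
      show "- Re (trace (G ** \<rho> t)) \<ge> 0" using est[OF \<open>t \<ge> 0\<close>] by simp
    qed (use that in auto)
    then show ?thesis by simp
  qed
  from lp obtain ts where ts: "filterlim ts at_top sequentially" and conv: "state_conv (\<lambda>k. \<rho> (ts k)) \<sigma>"
    by (auto simp: limit_point_at_top_def)
  have evge: "eventually (\<lambda>k. T \<le> ts k) sequentially" for T using ts by (simp add: filterlim_at_top)
  have convY: "((\<lambda>k. trace (\<rho> (ts k) ** Y)) \<longlongrightarrow> trace (\<sigma> ** Y)) sequentially" for Y
    using conv by (simp add: state_conv_def)
  define a where "a = Re (trace (V ** \<sigma>))"
  have fa: "((\<lambda>k. f (ts k)) \<longlongrightarrow> a) sequentially"
    using tendsto_Re[OF convY[of V]] by (simp add: f_def a_def trace_mul_sym[of _ V])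
  have a_le: "a \<le> f t" if "t \<ge> 0" for t
  proof (rule tendsto_upperbound[OF fa])
    show "eventually (\<lambda>k. f t \<ge> f (ts k)) sequentially"
      using evge[of t] by eventually_elim (use that fmono in auto)
  qed simp
  have a_ge: "a \<ge> 0"
  proof (rule tendsto_lowerbound[OF fa])
    show "eventually (\<lambda>k. 0 \<le> f (ts k)) sequentially"
      using evge[of 0] by eventually_elim (use est in auto)
  qed simp
  have a0: "a = 0"
  proof (rule ccontr)
    assume "a \<noteq> 0"
    then have ap: "a > 0" using a_ge by simp
    define s where "s = 2 * KV\<^sup>2 / (c * a)"
    have sp: "s > 0" using ap c_pos KV(1) by (simp add: s_def)
    have sK: "KV\<^sup>2 / s = c * a / 2" using ap c_pos KV(1) by (simp add: s_def field_simps)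
    define h where "h t = g t - s * KP * f t" for t
    define h' where "h' t = Re (trace (gen L (V ** V) ** \<rho> t)) - s * KP * Re (trace (G ** \<rho> t))" for t
    show False
    proof (rule growth_contra[of h h' "c * a / 2" "KV\<^sup>2"])
      fix t :: real assume t: "t \<ge> 0"
      show "(h has_real_derivative h' t) (at t within {0..})"
        unfolding h_def h'_def by (intro DERIV_diff dg t DERIV_cmult df)
      have "h' t \<ge> c * f t - KV\<^sup>2 / s" using est[OF t] sp by (auto simp: h'_def)
      moreover have "c * f t \<ge> c * a" using a_le[OF t] c_pos by simp
      ultimately show "h' t \<ge> c * a / 2" using sK by simp
      have "s * KP * f t \<ge> 0" using est[OF t] sp KP(1) by simp
      then show "h t \<le> KV\<^sup>2" using est[OF t] by (simp add: h_def)
    next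
      show "c * a / 2 > 0" using ap c_pos by simp
    qed
  qed
  have tr1: "trace \<sigma> = 1"
  proof -
    have "trace (\<sigma> ** mat 1) = 1"
      by (rule lim_ev_eq[OF convY[of "mat 1"]]) (use evge[of 0] in \<open>eventually_elim, simp add: tr_t\<close>)
    then show ?thesis by simp
  qed
  define E where "E j i = (\<chi> a b. if a = j \<and> b = i then 1 else (0::complex))" for j i :: 'n
  have conv_e: "((\<lambda>k. \<rho> (ts k) $ i $ j) \<longlongrightarrow> \<sigma> $ i $ j) sequentially" for i j
    using convY[of "E j i"] by (simp add: E_def trace_E)
  have sa\<sigma>: "self_adjoint \<sigma>"
  proof -
    have "cnj (\<sigma> $ j $ i) = \<sigma> $ i $ j" for i j
    proof -
      have "((\<lambda>k. cnj (\<rho> (ts k) $ j $ i)) \<longlongrightarrow> cnj (\<sigma> $ j $ i)) sequentially"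
        by (rule tendsto_cnj[OF conv_e])
      moreover have ev: "eventually (\<lambda>k. cnj (\<rho> (ts k) $ j $ i) = \<rho> (ts k) $ i $ j) sequentially"
        using evge[of 0]
      proof eventually_elim
        case (elim k)
        have "\<rho> (ts k) $ j $ i = cnj (\<rho> (ts k) $ i $ j)" by (rule sa_entry[OF sa_t[OF elim]])
        then show ?case by simp
      qed
      ultimately have "((\<lambda>k. \<rho> (ts k) $ i $ j) \<longlongrightarrow> cnj (\<sigma> $ j $ i)) sequentially"
        using tendsto_cong[OF ev] by simp
      from LIMSEQ_unique[OF this conv_e] show ?thesis .
    qed
    then show ?thesis by (simp add: self_adjoint_def vec_eq_iff)
  qed
  have q\<sigma>: "0 \<le> Re (qf \<sigma> x)" for x
  proof (rule tendsto_lowerbound)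
    show "((\<lambda>k. Re (qf (\<rho> (ts k)) x)) \<longlongrightarrow> Re (qf \<sigma> x)) sequentially"
      using tendsto_Re[OF convY[of "outer x"]] by (simp add: trace_outer)
    show "eventually (\<lambda>k. 0 \<le> Re (qf (\<rho> (ts k)) x)) sequentially"
      using evge[of 0] by eventually_elim (use psd_t in \<open>auto simp: psd_iff\<close>)
  qed simp
  have psd\<sigma>: "psd \<sigma>" using sa\<sigma> q\<sigma> by (simp add: psd_iff)
  have "Im (trace (V ** \<sigma>)) = 0"
  proof -
    obtain u where u: "\<sigma> = (\<Sum>k\<in>(UNIV::'n set). outer (u k))" using psd_decomp[OF psd\<sigma>] by blast
    show ?thesis using trace_decomp[OF u, of V] sa_qf_real[OF sV] by (simp add: Im_sum)
  qed
  then have "trace (V ** \<sigma>) = 0" using a0 by (simp add: a_def complex_eq_iff)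
  then show "\<sigma> \<in> Z_set V" using psd\<sigma> tr1 by (simp add: Z_set_def density_state_def)
qed


end
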